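(* Let $\Gamma=\Gamma_1+\cdots+\Gamma_n$ be the disjoint union of labeled graphs $\Gamma_i$ with $V_i$ vertices, $\Gamma_i\neq\Gamma_j$ for $i\neq j$, where $\Gamma$ has $V=V_1+\cdots+V_n$ vertices labeled so that the vertices of $\Gamma_1$ come first, then those of $\Gamma_2$, etc., each block keeping its internal order. Then $$c_\Gamma=\frac{V!}{V_1!\cdots V_n!}\,c_{\Gamma_1}\cdots c_{\Gamma_n}.$$
   Context: A labeled graph with $V$ vertices and $E$ edges is a map $s:\{1,\ldots,E\}\to\mathcal{P}_2\{1,\ldots,V\}$. Each edge with $s(e)=\{i,j\}$, $i<j$, is oriented $i\to j$. Define $c_\Gamma:=\sum_{\sigma\in S_V}\prod_{e:\,i\to j}\operatorname{sign}(\sigma(j)-\sigma(i))$. *)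

theory Defs
  imports Complex_Main "HOL-Combinatorics.Permutations"
begin

text \<open>A labeled graph with V vertices and E edges is represented as the pair
  (V, es) where es is the list of its edges (edge number e is es ! (e-1)),
  each edge being a 2-element subset of {1..V}.\<close>

type_synonym lgraph = "nat \<times> nat set list"

definition nverts :: "lgraph \<Rightarrow> nat" where
  "nverts G = fst G"

definition edges :: "lgraph \<Rightarrow> nat set list" where
  "edges G = snd G"

definition wf_lgraph :: "lgraph \<Rightarrow> bool" where
  "wf_lgraph G \<longleftrightarrow> (\<forall>e\<in>set (edges G). card e = 2 \<and> e \<subseteq> {1..nverts G})"

text \<open>Edge {i,j} with i<j is oriented i -> j; contributes sign(sigma j - sigma i).\<close>
definition edge_sign :: "(nat \<Rightarrow> nat) \<Rightarrow> nat set \<Rightarrow> int" where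
  "edge_sign \<sigma> e = sgn (int (\<sigma> (Max e)) - int (\<sigma> (Min e)))"

definition cG :: "lgraph \<Rightarrow> int" where
  "cG G = (\<Sum>\<sigma> \<in> {\<sigma>. \<sigma> permutes {1..nverts G}}.
              prod_list (map (edge_sign \<sigma>) (edges G)))"

fun dunion :: "lgraph list \<Rightarrow> lgraph" where
  "dunion [] = (0, [])"
| "dunion (G # Gs) =
     (nverts G + nverts (dunion Gs),
      edges G @ map (\<lambda>e. (\<lambda>v. v + nverts G) ` e) (edges (dunion Gs)))"

end

theory Submission
  imports Defs "HOL-Library.FuncSet"
begin

definition bijs :: "nat set \<Rightarrow> nat set \<Rightarrow> (nat \<Rightarrow> nat) set" where
  "bijs A T = {\<sigma> \<in> A \<rightarrow>\<^sub>E T. bij_betw \<sigma> A T}"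

definition cc :: "nat set list \<Rightarrow> nat set \<Rightarrow> nat set \<Rightarrow> int" where
  "cc E A T = (\<Sum>\<sigma>\<in>bijs A T. prod_list (map (edge_sign \<sigma>) E))"

definition okE :: "nat set list \<Rightarrow> nat set \<Rightarrow> bool" where
  "okE E A \<longleftrightarrow> (\<forall>e\<in>set E. finite e \<and> e \<noteq> {} \<and> e \<subseteq> A)"

lemma finite_bijs: "finite A \<Longrightarrow> finite T \<Longrightarrow> finite (bijs A T)"
  unfolding bijs_def by (rule finite_subset[OF _ finite_PiE[of A "\<lambda>_. T"]]) auto

lemma edge_sign_cong:
  assumes "finite e" "e \<noteq> {}" "\<And>x. x \<in> e \<Longrightarrow> \<sigma> x = \<tau> x"
  shows "edge_sign \<sigma> e = edge_sign \<tau> e"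
  using assms Max_in[OF assms(1,2)] Min_in[OF assms(1,2)] unfolding edge_sign_def by simp

lemma prod_cong:
  assumes "okE E A" "\<And>x. x \<in> A \<Longrightarrow> \<sigma> x = \<tau> x"
  shows "prod_list (map (edge_sign \<sigma>) E) = prod_list (map (edge_sign \<tau>) E)"
proof -
  have "map (edge_sign \<sigma>) E = map (edge_sign \<tau>) E"
  proof (rule map_cong[OF refl])
    fix e assume "e \<in> set E"
    then show "edge_sign \<sigma> e = edge_sign \<tau> e"
      using assms unfolding okE_def by (intro edge_sign_cong) auto
  qed
  then show ?thesis by (simp only:)
qed

lemma cG_cc:
  assumes "okE (edges G) {1..nverts G}"
  shows "cG G = cc (edges G) {1..nverts G} {1..nverts G}"
  unfolding cG_def cc_def
proof (rule sum.reindex_bij_witness[where j = "\<lambda>\<sigma>. restrict \<sigma> {1..nverts G}"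
      and i = "\<lambda>\<tau> x. if x \<in> {1..nverts G} then \<tau> x else x"])
  fix \<sigma> assume "\<sigma> \<in> {\<sigma>. \<sigma> permutes {1..nverts G}}"
  then have p: "\<sigma> permutes {1..nverts G}" by simp
  then show "(\<lambda>x. if x \<in> {1..nverts G} then restrict \<sigma> {1..nverts G} x else x) = \<sigma>"
    by (auto simp: permutes_def)
  have b: "bij_betw \<sigma> {1..nverts G} {1..nverts G}" using p permutes_imp_bij by blast
  show "restrict \<sigma> {1..nverts G} \<in> bijs {1..nverts G} {1..nverts G}"
    unfolding bijs_def using b bij_betw_cong[of "{1..nverts G}" "restrict \<sigma> {1..nverts G}" \<sigma>]
    by (auto simp: bij_betw_def)
  show "prod_list (map (edge_sign (restrict \<sigma> {1..nverts G})) (edges G)) =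
        prod_list (map (edge_sign \<sigma>) (edges G))"
    by (rule prod_cong[OF assms]) simp
next
  fix \<tau> assume "\<tau> \<in> bijs {1..nverts G} {1..nverts G}"
  then have t: "\<tau> \<in> {1..nverts G} \<rightarrow>\<^sub>E {1..nverts G}" "bij_betw \<tau> {1..nverts G} {1..nverts G}"
    by (auto simp: bijs_def)
  show "restrict (\<lambda>x. if x \<in> {1..nverts G} then \<tau> x else x) {1..nverts G} = \<tau>"
    using t(1) by (auto simp: PiE_def extensional_def)
  have "bij_betw (\<lambda>x. if x \<in> {1..nverts G} then \<tau> x else x) {1..nverts G} {1..nverts G}"
    using t(2) by (rule bij_betw_cong[THEN iffD1, rotated]) auto
  then show "(\<lambda>x. if x \<in> {1..nverts G} then \<tau> x else x) \<in> {\<sigma>. \<sigma> permutes {1..nverts G}}"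
    by (auto intro!: bij_imp_permutes)
qed

lemma sgn_strict_mono:
  assumes "strict_mono_on T h" "x \<in> T" "y \<in> T"
  shows "sgn (int (h x) - int (h y)) = sgn (int x - int y)"
proof -
  consider "x < y" | "x = y" | "y < x" by linarith
  then show ?thesis
  proof cases
    case 1 then have "h x < h y" using assms by (auto simp: strict_mono_on_def)
    then show ?thesis using 1 by simp
  next
    case 3 then have "h y < h x" using assms by (auto simp: strict_mono_on_def)
    then show ?thesis using 3 by simp
  qed simp
qed

lemma cc_target:
  assumes "okE E A" "bij_betw h T T'" "strict_mono_on T h"
  shows "cc E A T = cc E A T'"
  unfolding cc_def
proof (rule sum.reindex_bij_witness[where j = "\<lambda>\<sigma>. restrict (h \<circ> \<sigma>) A"
      and i = "\<lambda>\<tau>. restrict (the_inv_into T h \<circ> \<tau>) A"])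
  have inj: "inj_on h T" and im: "h ` T = T'" using assms(2) by (auto simp: bij_betw_def)
  fix \<sigma> assume "\<sigma> \<in> bijs A T"
  then have s: "\<sigma> \<in> A \<rightarrow>\<^sub>E T" "bij_betw \<sigma> A T" by (auto simp: bijs_def)
  show "restrict (the_inv_into T h \<circ> restrict (h \<circ> \<sigma>) A) A = \<sigma>"
    using s(1) inj by (auto simp: PiE_def extensional_def the_inv_into_f_f Pi_def)
  have "bij_betw (h \<circ> \<sigma>) A T'" using s(2) assms(2) by (rule bij_betw_trans)
  then have "bij_betw (restrict (h \<circ> \<sigma>) A) A T'"
    by (rule bij_betw_cong[THEN iffD1, rotated]) auto
  then show "restrict (h \<circ> \<sigma>) A \<in> bijs A T'"
    unfolding bijs_def using s(1) im by auto
  show "prod_list (map (edge_sign (restrict (h \<circ> \<sigma>) A)) E) = prod_list (map (edge_sign \<sigma>) E)"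
  proof -
    have "map (edge_sign (restrict (h \<circ> \<sigma>) A)) E = map (edge_sign \<sigma>) E"
    proof (rule map_cong[OF refl])
      fix e assume e: "e \<in> set E"
      then have f: "finite e" "e \<noteq> {}" "e \<subseteq> A" using assms(1) by (auto simp: okE_def)
      have "Max e \<in> A" "Min e \<in> A" using Max_in[OF f(1,2)] Min_in[OF f(1,2)] f(3) by auto
      then show "edge_sign (restrict (h \<circ> \<sigma>) A) e = edge_sign \<sigma> e"
        unfolding edge_sign_def using sgn_strict_mono[OF assms(3)] s(1) by (auto simp: PiE_def Pi_def)
    qed
    then show ?thesis by (simp only:)
  qed
next
  have inj: "inj_on h T" and im: "h ` T = T'" using assms(2) by (auto simp: bij_betw_def)
  have bi: "bij_betw (the_inv_into T h) T' T" using assms(2) by (rule bij_betw_the_inv_into)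
  fix \<tau> assume "\<tau> \<in> bijs A T'"
  then have t: "\<tau> \<in> A \<rightarrow>\<^sub>E T'" "bij_betw \<tau> A T'" by (auto simp: bijs_def)
  show "restrict (h \<circ> restrict (the_inv_into T h \<circ> \<tau>) A) A = \<tau>"
    using t(1) inj im by (auto simp: PiE_def extensional_def f_the_inv_into_f Pi_def)
  have "bij_betw (the_inv_into T h \<circ> \<tau>) A T" using t(2) bi by (rule bij_betw_trans)
  then have "bij_betw (restrict (the_inv_into T h \<circ> \<tau>) A) A T"
    by (rule bij_betw_cong[THEN iffD1, rotated]) auto
  then show "restrict (the_inv_into T h \<circ> \<tau>) A \<in> bijs A T"
    unfolding bijs_def using t(1) bi by (auto simp: bij_betw_def)
qed

lemma cc_rank:
  assumes "okE E A" "finite T"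
  shows "cc E A T = cc E A {1..card T}"
proof -
  define r where "r x = card {y\<in>T. y \<le> x}" for x
  have sm: "strict_mono_on T r"
  proof (rule strict_mono_onI)
    fix x y assume "x \<in> T" "y \<in> T" "x < y"
    then have "{z\<in>T. z \<le> x} \<subset> {z\<in>T. z \<le> y}"
      by (intro psubsetI) (auto simp: set_eq_iff intro!: exI[of _ y])
    then show "r x < r y" unfolding r_def by (rule psubset_card_mono[rotated]) (use assms(2) in auto)
  qed
  then have inj: "inj_on r T" by (rule strict_mono_on_imp_inj_on)
  have sub: "r ` T \<subseteq> {1..card T}"
  proof
    fix z assume "z \<in> r ` T"
    then obtain x where x: "x \<in> T" "z = r x" by auto
    have "{y\<in>T. y \<le> x} \<noteq> {}" using x by auto
    then have "r x \<ge> 1" unfolding r_def using assms(2) by (simp add: Suc_le_eq card_gt_0_iff)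
    moreover have "r x \<le> card T" unfolding r_def using assms(2) by (intro card_mono) auto
    ultimately show "z \<in> {1..card T}" using x by auto
  qed
  have "card (r ` T) = card {1..card T}" using card_image[OF inj] by simp
  then have "r ` T = {1..card T}" using sub by (intro card_subset_eq) auto
  then have "bij_betw r T {1..card T}" using inj by (simp add: bij_betw_def)
  then show ?thesis using cc_target[OF assms(1) _ sm] by blast
qed

lemma cc_shift:
  assumes "okE E A"
  shows "cc (map (\<lambda>e. (\<lambda>v. v + k) ` e) E) ((\<lambda>v. v + k) ` A) T = cc E A T"
  unfolding cc_def
proof (rule sum.reindex_bij_witness[where j = "\<lambda>\<sigma>. restrict (\<lambda>x. \<sigma> (x + k)) A"
      and i = "\<lambda>\<tau>. restrict (\<lambda>y. \<tau> (y - k)) ((\<lambda>v. v + k) ` A)"])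
  have bs: "bij_betw (\<lambda>v. v + k) A ((\<lambda>v. v + k) ` A)" by (simp add: bij_betw_def inj_on_def)
  fix \<sigma> assume "\<sigma> \<in> bijs ((\<lambda>v. v + k) ` A) T"
  then have s: "\<sigma> \<in> (\<lambda>v. v + k) ` A \<rightarrow>\<^sub>E T" "bij_betw \<sigma> ((\<lambda>v. v + k) ` A) T"
    by (auto simp: bijs_def)
  show "restrict (\<lambda>y. restrict (\<lambda>x. \<sigma> (x + k)) A (y - k)) ((\<lambda>v. v + k) ` A) = \<sigma>"
    using s(1) by (intro ext) (auto simp: PiE_def extensional_def)
  have "bij_betw (\<sigma> \<circ> (\<lambda>v. v + k)) A T" using bs s(2) by (rule bij_betw_trans)
  then have "bij_betw (restrict (\<lambda>x. \<sigma> (x + k)) A) A T"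
    by (rule bij_betw_cong[THEN iffD1, rotated]) auto
  then show "restrict (\<lambda>x. \<sigma> (x + k)) A \<in> bijs A T"
    unfolding bijs_def using s(1) by (auto simp: PiE_def Pi_def)
  have "map (edge_sign (restrict (\<lambda>x. \<sigma> (x + k)) A)) E
      = map (edge_sign \<sigma>) (map (\<lambda>e. (\<lambda>v. v + k) ` e) E)"
    unfolding map_map
  proof (rule map_cong[OF refl])
    fix e assume e: "e \<in> set E"
    then have f: "finite e" "e \<noteq> {}" "e \<subseteq> A" using assms(1) by (auto simp: okE_def)
    have m: "mono (\<lambda>v::nat. v + k)" by (simp add: mono_def)
    have "Max e \<in> A" "Min e \<in> A" using Max_in[OF f(1,2)] Min_in[OF f(1,2)] f(3) by auto
    moreover have "Max ((\<lambda>v. v + k) ` e) = Max e + k" "Min ((\<lambda>v. v + k) ` e) = Min e + k"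
      using mono_Max_commute[OF m f(1,2)] mono_Min_commute[OF m f(1,2)] by simp_all
    ultimately show "edge_sign (restrict (\<lambda>x. \<sigma> (x + k)) A) e = (edge_sign \<sigma> \<circ> (\<lambda>e. (\<lambda>v. v + k) ` e)) e"
      unfolding edge_sign_def by simp
  qed
  then show "prod_list (map (edge_sign (restrict (\<lambda>x. \<sigma> (x + k)) A)) E) =
     prod_list (map (edge_sign \<sigma>) (map (\<lambda>e. (\<lambda>v. v + k) ` e) E))" by (simp only:)
next
  fix \<tau> assume "\<tau> \<in> bijs A T"
  then have t: "\<tau> \<in> A \<rightarrow>\<^sub>E T" "bij_betw \<tau> A T" by (auto simp: bijs_def)
  show "restrict (\<lambda>x. restrict (\<lambda>y. \<tau> (y - k)) ((\<lambda>v. v + k) ` A) (x + k)) A = \<tau>"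
    using t(1) by (auto simp: PiE_def extensional_def)
  have bs: "bij_betw (\<lambda>v. v - k) ((\<lambda>v. v + k) ` A) A"
    by (auto simp: bij_betw_def inj_on_def image_image)
  have "bij_betw (\<tau> \<circ> (\<lambda>v. v - k)) ((\<lambda>v. v + k) ` A) T" using bs t(2) by (rule bij_betw_trans)
  then have "bij_betw (restrict (\<lambda>y. \<tau> (y - k)) ((\<lambda>v. v + k) ` A)) ((\<lambda>v. v + k) ` A) T"
    by (rule bij_betw_cong[THEN iffD1, rotated]) auto
  then show "restrict (\<lambda>y. \<tau> (y - k)) ((\<lambda>v. v + k) ` A) \<in> bijs ((\<lambda>v. v + k) ` A) T"
    unfolding bijs_def using t(1) by (auto simp: PiE_def Pi_def)
qed

definition merge :: "nat set \<Rightarrow> nat set \<Rightarrow> (nat \<Rightarrow> nat) \<Rightarrow> (nat \<Rightarrow> nat) \<Rightarrow> nat \<Rightarrow> nat" where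
  "merge A B f g x = (if x \<in> A then f x else if x \<in> B then g x else undefined)"

lemma cc_split:
  assumes fin: "finite A" "finite B" and dis: "A \<inter> B = {}" and ok: "okE EA A" "okE EB B"
    and fT: "finite T"
  shows "cc (EA @ EB) (A \<union> B) T =
    (\<Sum>S\<in>{S. S \<subseteq> T \<and> card S = card A}. cc EA A S * cc EB B (T - S))"
proof -
  let ?SS = "{S. S \<subseteq> T \<and> card S = card A}"
  let ?X = "SIGMA S:?SS. bijs A S \<times> bijs B (T - S)"
  have "(\<Sum>S\<in>?SS. cc EA A S * cc EB B (T - S)) =
     (\<Sum>S\<in>?SS. \<Sum>p\<in>bijs A S \<times> bijs B (T - S).
        prod_list (map (edge_sign (fst p)) EA) * prod_list (map (edge_sign (snd p)) EB))"
    unfolding cc_def sum_product sum.cartesian_product by (simp add: case_prod_beta)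
  also have "\<dots> = (\<Sum>q\<in>?X. prod_list (map (edge_sign (fst (snd q))) EA) *
                             prod_list (map (edge_sign (snd (snd q))) EB))"
  proof -
    have f1: "finite ?SS" using fT by (rule rev_finite_subset[OF finite_Pow_iff[THEN iffD2]]) auto
    have f2: "\<forall>S\<in>?SS. finite (bijs A S \<times> bijs B (T - S))"
      using fT fin by (auto intro!: finite_bijs intro: rev_finite_subset)
    show ?thesis by (subst sum.Sigma[OF f1 f2]) (simp add: case_prod_beta)
  qed
  also have "\<dots> = cc (EA @ EB) (A \<union> B) T"
    unfolding cc_def
  proof (rule sum.reindex_bij_witness[where j = "\<lambda>q. merge A B (fst (snd q)) (snd (snd q))"
      and i = "\<lambda>\<sigma>. (\<sigma> ` A, restrict \<sigma> A, restrict \<sigma> B)"])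
    fix q assume q: "q \<in> ?X"
    obtain S f g where qq: "q = (S, f, g)" by (cases q) auto
    have S: "S \<subseteq> T" "card S = card A" and f: "f \<in> A \<rightarrow>\<^sub>E S" "bij_betw f A S"
      and g: "g \<in> B \<rightarrow>\<^sub>E (T - S)" "bij_betw g B (T - S)"
      using q qq by (auto simp: bijs_def)
    have mA: "\<And>x. x \<in> A \<Longrightarrow> merge A B f g x = f x" by (simp add: merge_def)
    have mB: "\<And>x. x \<in> B \<Longrightarrow> merge A B f g x = g x" using dis by (auto simp: merge_def)
    have "merge A B f g ` A = S" using f(2) mA by (auto simp: bij_betw_def image_def)
    moreover have "restrict (merge A B f g) A = f" using f(1) mA
      by (intro ext) (auto simp: PiE_def extensional_def)
    moreover have "restrict (merge A B f g) B = g" using g(1) mB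
      by (intro ext) (auto simp: PiE_def extensional_def)
    ultimately show "(merge A B (fst (snd q)) (snd (snd q)) ` A,
        restrict (merge A B (fst (snd q)) (snd (snd q))) A,
        restrict (merge A B (fst (snd q)) (snd (snd q))) B) = q" using qq by simp
    have b1: "bij_betw (merge A B f g) A S" using bij_betw_cong[of A "merge A B f g" f S] f(2) mA by simp
    have b2: "bij_betw (merge A B f g) B (T - S)" using bij_betw_cong[of B "merge A B f g" g "T - S"] g(2) mB by simp
    have "bij_betw (merge A B f g) (A \<union> B) (S \<union> (T - S))"
      by (rule bij_betw_combine[OF b1 b2]) auto
    moreover have "S \<union> (T - S) = T" using S by auto
    moreover have "merge A B f g \<in> A \<union> B \<rightarrow>\<^sub>E T"
      using f(1) g(1) S(1) by (auto simp: merge_def PiE_def Pi_def extensional_def)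
    ultimately show "merge A B (fst (snd q)) (snd (snd q)) \<in> bijs (A \<union> B) T"
      using qq by (simp add: bijs_def)
    have "prod_list (map (edge_sign (merge A B f g)) EA) = prod_list (map (edge_sign f) EA)"
      using prod_cong[OF ok(1), of "merge A B f g" f] mA by blast
    moreover have "prod_list (map (edge_sign (merge A B f g)) EB) = prod_list (map (edge_sign g) EB)"
      using prod_cong[OF ok(2), of "merge A B f g" g] mB by blast
    ultimately show "prod_list (map (edge_sign (merge A B (fst (snd q)) (snd (snd q)))) (EA @ EB)) =
         prod_list (map (edge_sign (fst (snd q))) EA) * prod_list (map (edge_sign (snd (snd q))) EB)"
      using qq by simp
  next
    fix \<sigma> assume "\<sigma> \<in> bijs (A \<union> B) T"
    then have s: "\<sigma> \<in> A \<union> B \<rightarrow>\<^sub>E T" "bij_betw \<sigma> (A \<union> B) T" by (auto simp: bijs_def)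
    show "merge A B (fst (snd (\<sigma> ` A, restrict \<sigma> A, restrict \<sigma> B)))
            (snd (snd (\<sigma> ` A, restrict \<sigma> A, restrict \<sigma> B))) = \<sigma>"
      using s(1) by (intro ext) (auto simp: merge_def PiE_def extensional_def)
    have inj: "inj_on \<sigma> (A \<union> B)" and im: "\<sigma> ` (A \<union> B) = T" using s(2) by (auto simp: bij_betw_def)
    have iA: "inj_on \<sigma> A" and iB: "inj_on \<sigma> B" using inj by (auto intro: inj_on_subset)
    have BT: "\<sigma> ` B = T - \<sigma> ` A"
    proof -
      have "\<sigma> ` A \<inter> \<sigma> ` B = {}" using inj dis by (auto simp: inj_on_def)
      then show ?thesis using im by auto
    qed
    have "\<sigma> ` A \<subseteq> T" "card (\<sigma> ` A) = card A" using im card_image[OF iA] by auto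
    moreover have "restrict \<sigma> A \<in> bijs A (\<sigma> ` A)"
      unfolding bijs_def using iA
      by (auto simp: bij_betw_def inj_on_def)
    moreover have "restrict \<sigma> B \<in> bijs B (T - \<sigma> ` A)"
      unfolding bijs_def using iB BT[symmetric]
      by (auto simp: bij_betw_def inj_on_def)
    ultimately show "(\<sigma> ` A, restrict \<sigma> A, restrict \<sigma> B) \<in> ?X" by simp
  qed
  finally show ?thesis by simp
qed

lemma okE_shift: "okE E A \<Longrightarrow> okE (map (\<lambda>e. (\<lambda>v. v + k) ` e) E) ((\<lambda>v. v + k) ` A)"
  unfolding okE_def by auto

lemma okE_mono: "okE E A \<Longrightarrow> A \<subseteq> A' \<Longrightarrow> okE E A'"
  unfolding okE_def by auto

lemma okE_append: "okE E A \<Longrightarrow> okE E' A \<Longrightarrow> okE (E @ E') A"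
  unfolding okE_def by auto

lemma shift_ivl: "(\<lambda>v. v + a) ` {1..m} = {a+1..a+(m::nat)}"
proof -
  have "(\<lambda>v. v + a) ` {1..m} = (+) a ` {1..m}" by (simp add: add.commute)
  also have "\<dots> = {a+1..a+m}" by simp
  finally show ?thesis .
qed

lemma step:
  assumes okG: "okE (edges G) {1..nverts G}" and okD: "okE (edges D) {1..nverts D}"
  shows "cG (nverts G + nverts D, edges G @ map (\<lambda>e. (\<lambda>v. v + nverts G) ` e) (edges D))
       = int ((nverts G + nverts D) choose nverts G) * (cG G * cG D)"
proof -
  define a where "a = nverts G"
  define m where "m = nverts D"
  define B where "B = (\<lambda>v. v + a) ` {1..m}"
  define ED' where "ED' = map (\<lambda>e. (\<lambda>v. v + a) ` e) (edges D)"
  define T where "T = {1..a+m}"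
  have okG': "okE (edges G) {1..a}" using okG a_def by simp
  have okD': "okE (edges D) {1..m}" using okD m_def by simp
  have okB: "okE ED' B" unfolding ED'_def B_def by (rule okE_shift[OF okD'])
  have B: "B = {a+1..a+m}" unfolding B_def by (rule shift_ivl)
  have TU: "T = {1..a} \<union> B" unfolding T_def B by auto
  have dis: "{1..a} \<inter> B = {}" unfolding B by auto
  have okU: "okE (edges G @ ED') T"
    by (rule okE_append; rule okE_mono) (use okG' okB TU in auto)
  have "cG (a + m, edges G @ ED') = cc (edges G @ ED') T T"
    using cG_cc[of "(a + m, edges G @ ED')"] okU unfolding T_def by (simp add: nverts_def edges_def)
  also have "\<dots> = (\<Sum>S\<in>{S. S \<subseteq> T \<and> card S = card {1..a}}. cc (edges G) {1..a} S * cc ED' B (T - S))"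
  proof -
    have "cc (edges G @ ED') T T = cc (edges G @ ED') ({1..a} \<union> B) T" by (simp only: TU[symmetric])
    also have "\<dots> = (\<Sum>S\<in>{S. S \<subseteq> T \<and> card S = card {1..a}}. cc (edges G) {1..a} S * cc ED' B (T - S))"
      by (rule cc_split) (use okG' okB dis in \<open>auto simp: B T_def\<close>)
    finally show ?thesis .
  qed
  also have "\<dots> = (\<Sum>S\<in>{S. S \<subseteq> T \<and> card S = a}. cG G * cG D)"
  proof (rule sum.cong)
    fix S assume "S \<in> {S. S \<subseteq> T \<and> card S = a}"
    then have S: "S \<subseteq> T" "card S = a" by auto
    have fS: "finite S" using S(1) T_def finite_subset by blast
    have "cc (edges G) {1..a} S = cc (edges G) {1..a} {1..a}"
      using cc_rank[OF okG' fS] S by simp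
    also have "\<dots> = cG G" using cG_cc[OF okG] a_def by simp
    finally have 1: "cc (edges G) {1..a} S = cG G" .
    have cT: "card (T - S) = m" using S by (simp add: card_Diff_subset fS T_def)
    have "cc ED' B (T - S) = cc (edges D) {1..m} (T - S)"
      unfolding ED'_def B_def by (rule cc_shift[OF okD'])
    also have "\<dots> = cc (edges D) {1..m} {1..m}"
      using cc_rank[OF okD', of "T - S"] cT T_def by simp
    also have "\<dots> = cG D" using cG_cc[OF okD] m_def by simp
    finally show "cc (edges G) {1..a} S * cc ED' B (T - S) = cG G * cG D" using 1 by simp
  qed simp
  also have "\<dots> = int ((a + m) choose a) * (cG G * cG D)"
    using n_subsets[of T a] T_def by simp
  finally show ?thesis unfolding a_def m_def ED'_def .
qed

lemma wf_okE: "wf_lgraph G \<Longrightarrow> okE (edges G) {1..nverts G}"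
  unfolding wf_lgraph_def okE_def by (auto intro: card_ge_0_finite)

lemma main_aux:
  assumes "\<forall>G\<in>set Gs. wf_lgraph G"
  shows "okE (edges (dunion Gs)) {1..nverts (dunion Gs)} \<and>
         nverts (dunion Gs) = (\<Sum>G\<leftarrow>Gs. nverts G) \<and>
         real_of_int (cG (dunion Gs)) * (\<Prod>G\<leftarrow>Gs. fact (nverts G)) =
           fact (\<Sum>G\<leftarrow>Gs. nverts G) * (\<Prod>G\<leftarrow>Gs. real_of_int (cG G))"
  using assms
proof (induction Gs)
  case Nil
  have "{\<sigma>. \<sigma> permutes {1..0::nat}} = {id}" by auto
  then have "cG (dunion []) = 1" by (simp add: cG_def nverts_def edges_def)
  then show ?case by (simp add: okE_def nverts_def edges_def)
next
  case (Cons G Gs)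
  define D where "D = dunion Gs"
  define a where "a = nverts G"
  define m where "m = nverts D"
  have okG: "okE (edges G) {1..nverts G}" using Cons.prems wf_okE by simp
  have IH: "okE (edges D) {1..m}" "m = (\<Sum>G\<leftarrow>Gs. nverts G)"
     "real_of_int (cG D) * (\<Prod>G\<leftarrow>Gs. fact (nverts G)) =
           fact m * (\<Prod>G\<leftarrow>Gs. real_of_int (cG G))"
    using Cons.IH Cons.prems unfolding D_def m_def by auto
  have dU: "dunion (G # Gs) = (a + m, edges G @ map (\<lambda>e. (\<lambda>v. v + a) ` e) (edges D))"
    by (simp add: D_def a_def m_def)
  have ok: "okE (edges (dunion (G # Gs))) {1..nverts (dunion (G # Gs))}"
  proof -
    have "okE (map (\<lambda>e. (\<lambda>v. v + a) ` e) (edges D)) ((\<lambda>v. v + a) ` {1..m})"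
      by (rule okE_shift[OF IH(1)])
    then have "okE (map (\<lambda>e. (\<lambda>v. v + a) ` e) (edges D)) {1..a+m}"
      by (rule okE_mono) (auto simp: shift_ivl)
    moreover have "okE (edges G) {1..a+m}" using okE_mono[OF okG, of "{1..a+m}"] a_def by auto
    ultimately show ?thesis unfolding dU by (simp add: nverts_def edges_def okE_append)
  qed
  have st: "cG (dunion (G # Gs)) = int ((a + m) choose a) * (cG G * cG D)"
    unfolding dU a_def m_def using step[OF okG IH(1)[unfolded m_def]] .
  have bf: "fact a * fact m * real ((a + m) choose a) = fact (a + m)"
    using binomial_fact_lemma[of a "a + m"] by (metis add_diff_cancel_left' le_add1 of_nat_fact of_nat_mult)
  have "real_of_int (cG (dunion (G # Gs))) * (\<Prod>G\<leftarrow>G # Gs. fact (nverts G))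
      = real ((a + m) choose a) * real_of_int (cG G) * fact a * (real_of_int (cG D) * (\<Prod>G\<leftarrow>Gs. fact (nverts G)))"
    unfolding st by (simp add: a_def)
  also have "\<dots> = real ((a + m) choose a) * real_of_int (cG G) * fact a * (fact m * (\<Prod>G\<leftarrow>Gs. real_of_int (cG G)))"
    using IH(3) by simp
  also have "\<dots> = (fact a * fact m * real ((a + m) choose a)) * (real_of_int (cG G) * (\<Prod>G\<leftarrow>Gs. real_of_int (cG G)))"
    by (simp add: algebra_simps)
  also have "\<dots> = fact (\<Sum>G\<leftarrow>G # Gs. nverts G) * (\<Prod>G\<leftarrow>G # Gs. real_of_int (cG G))"
    unfolding bf using IH(2) a_def by simp
  finally show ?case using ok IH(2) dU by (simp add: nverts_def a_def)
qed

theorem mainTheorem9: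
  fixes Gs :: "lgraph list"
  assumes "\<forall>G\<in>set Gs. wf_lgraph G"
    and "distinct Gs"
  shows "real_of_int (cG (dunion Gs)) =
           fact (\<Sum>G\<leftarrow>Gs. nverts G) / (\<Prod>G\<leftarrow>Gs. fact (nverts G))
           * (\<Prod>G\<leftarrow>Gs. real_of_int (cG G))"
proof -
  have nz: "(\<Prod>G\<leftarrow>Gs. fact (nverts G) :: real) \<noteq> 0"
    by (auto simp: prod_list_zero_iff)
  show ?thesis using main_aux[OF assms(1)] nz by (simp add: field_simps)
qed

end
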